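(* Let $H$ be a reduced double-well type potential and $h$ its Peierls barrier. Then \begin{enumerate} \item $h(0^\infty,x)=0$ for all $x\in[0]$ (in particular $h(0^\infty,0^\infty)=0$); \item $h(0^\infty,x)=\inf_{k\ge n}H_k^0$ for all $x\in[1^n0]$, $n\ge1$; in particular $h(0^\infty,1^\infty)=H_\infty^0$; \item $\liminf_{x\to0^\infty,\,x\neq 0^\infty}h(x,0^\infty)=H_{min}^0+H_\infty^1$; \item $h(1^\infty,x)=0$ for all $x\in[1]$ (in particular $h(1^\infty,1^\infty)=0$); \item $h(1^\infty,x)=\inf_{k\ge n}H_k^1$ for all $x\in[0^n1]$, $n\ge1$; in particular $h(1^\infty,0^\infty)=H_\infty^1$; \item $\liminf_{x\to1^\infty,\,x\neq1^\infty}h(x,1^\infty)=H_{min}^1+H_\infty^0$. \end{enumerate}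
   Context: $\Sigma:=\{0,1\}^{\mathbb N}$, $\sigma$ the left shift, cylinders $[i_0\dots i_{n-1}]$; $x\stackrel{n}{=}y$ means $x_j=y_j$ for $0\le j<n$; $\mathrm{var}(H,n):=\sup\{|H(x)-H(y)|:x\stackrel{n}{=}y\}$. A reduced double-well type potential is a continuous nonnegative $H:\Sigma\to\mathbb R$ with $\sum_n\mathrm{var}(H,n)<\infty$ such that $H=0$ on $[00]\cup[11]$, $H=H_n^0>0$ on $[01^n0]$, $H=H_n^1>0$ on $[10^n1]$ for $n\ge1$, and $\sum_{k\ge1}\sup_{n\ge0}|H_k^i-H_{k+n}^i|<\infty$ ($i=0,1$). Set $H_\infty^i:=\lim_nH_n^i$, $H_{min}^i:=\inf_{n\ge1}H_n^i$. $\bar H:=\lim_{n}\inf_{x}\frac1n\sum_{k=0}^{n-1}H(\sigma^kx)$ (here $\bar H=0$). Peierls barrier: $h(x,y):=\lim_{p\to\infty}\lim_{n\to\infty}S_n^p(x,y)$, $S_n^p(x,y):=\inf\{\sum_{i=0}^{k-1}[H(\sigma^iz)-\bar H]:k\ge n,\ z\stackrel{p}{=}x,\ \sigma^k(z)\stackrel{p}{=}y\}$. *)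

theory Defs
  imports "HOL-Analysis.Analysis"
begin

text \<open>Sigma = {0,1}^N is modelled as nat => bool, with 0 = False and 1 = True.
  It carries the product topology (bool discrete) from HOL-Analysis.\<close>

type_synonym sym_seq = "nat \<Rightarrow> bool"

definition shift :: "sym_seq \<Rightarrow> sym_seq" where
  "shift x = (\<lambda>j. x (Suc j))"

definition agree :: "nat \<Rightarrow> sym_seq \<Rightarrow> sym_seq \<Rightarrow> bool" where
  "agree n x y \<longleftrightarrow> (\<forall>j<n. x j = y j)"

definition var :: "(sym_seq \<Rightarrow> real) \<Rightarrow> nat \<Rightarrow> ereal" where
  "var H n = (SUP p \<in> {(x, y). agree n x y}. ereal \<bar>H (fst p) - H (snd p)\<bar>)"

definition zeros :: sym_seq where "zeros = (\<lambda>_. False)"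
definition ones :: sym_seq where "ones = (\<lambda>_. True)"

text \<open>Reduced double-well type potential, with H0 n = H_n^0 and H1 n = H_n^1 (n >= 1).\<close>
definition reduced_double_well :: "(sym_seq \<Rightarrow> real) \<Rightarrow> (nat \<Rightarrow> real) \<Rightarrow> (nat \<Rightarrow> real) \<Rightarrow> bool" where
  "reduced_double_well H H0 H1 \<longleftrightarrow>
     continuous_on UNIV H \<and> (\<forall>x. H x \<ge> 0) \<and>
     (\<Sum>n. var H n) < \<infinity> \<and>
     (\<forall>x. (x 0 = x 1) \<longrightarrow> H x = 0) \<and>
     (\<forall>n\<ge>1. H0 n > 0 \<and> H1 n > 0) \<and>
     (\<forall>n\<ge>1. \<forall>x. (\<not> x 0 \<and> (\<forall>j\<in>{1..n}. x j) \<and> \<not> x (Suc n)) \<longrightarrow> H x = H0 n) \<and>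
     (\<forall>n\<ge>1. \<forall>x. (x 0 \<and> (\<forall>j\<in>{1..n}. \<not> x j) \<and> x (Suc n)) \<longrightarrow> H x = H1 n) \<and>
     (\<Sum>k. (SUP n. ereal \<bar>H0 (Suc k) - H0 (Suc k + n)\<bar>)) < \<infinity> \<and>
     (\<Sum>k. (SUP n. ereal \<bar>H1 (Suc k) - H1 (Suc k + n)\<bar>)) < \<infinity>"

definition H_inf :: "(nat \<Rightarrow> real) \<Rightarrow> real" where
  "H_inf Hs = lim Hs"

definition H_min :: "(nat \<Rightarrow> real) \<Rightarrow> real" where
  "H_min Hs = (INF n \<in> {1..}. Hs n)"

definition Hbar :: "(sym_seq \<Rightarrow> real) \<Rightarrow> real" where
  "Hbar H = lim (\<lambda>n. INF x. (1 / real n) * (\<Sum>k<n. H ((shift ^^ k) x)))"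

definition S_peierls :: "(sym_seq \<Rightarrow> real) \<Rightarrow> nat \<Rightarrow> nat \<Rightarrow> sym_seq \<Rightarrow> sym_seq \<Rightarrow> ereal" where
  "S_peierls H p n x y =
     (INF kz \<in> {(k, z). k \<ge> n \<and> agree p z x \<and> agree p ((shift ^^ k) z) y}.
        ereal (\<Sum>i<fst kz. H ((shift ^^ i) (snd kz)) - Hbar H))"

definition peierls :: "(sym_seq \<Rightarrow> real) \<Rightarrow> sym_seq \<Rightarrow> sym_seq \<Rightarrow> ereal" where
  "peierls H x y = lim (\<lambda>p. lim (\<lambda>n. S_peierls H p n x y))"

end

theory Submission
  imports Defs
begin


lemma shift_pow: "(shift ^^ i) z = (\<lambda>j. z (i + j))"
  by (induction i) (auto simp: shift_def)

lemma last_change: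
  fixes z :: sym_seq
  assumes "z a = b" "z k \<noteq> b" "a \<le> k"
  shows "\<exists>t. a \<le> t \<and> t < k \<and> z t = b \<and> (\<forall>j. t < j \<and> j \<le> k \<longrightarrow> z j \<noteq> b)"
  using assms
proof (induction k)
  case 0 then show ?case by auto
next
  case (Suc k)
  show ?case
  proof (cases "z k = b")
    case True
    then show ?thesis using Suc.prems by (intro exI[of _ k]) (auto simp: le_Suc_eq)
  next
    case False
    have "a \<noteq> Suc k" using Suc.prems by auto
    then have "a \<le> k" using Suc.prems by auto
    from Suc.IH[OF Suc.prems(1) False this] obtain t where
      "a \<le> t" "t < k" "z t = b" "\<forall>j. t < j \<and> j \<le> k \<longrightarrow> z j \<noteq> b" by blast
    then show ?thesis using Suc.prems by (intro exI[of _ t]) (auto simp: le_Suc_eq)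
  qed
qed

lemma first_change:
  fixes z :: sym_seq
  assumes "\<exists>e>s. z e = b"
  shows "\<exists>e>s. z e = b \<and> (\<forall>j. s < j \<and> j < e \<longrightarrow> z j \<noteq> b)"
proof -
  define e where "e = (LEAST e. s < e \<and> z e = b)"
  have "s < e \<and> z e = b" unfolding e_def using LeastI_ex[of "\<lambda>e. s < e \<and> z e = b"] assms by blast
  moreover have "\<forall>j. s < j \<and> j < e \<longrightarrow> z j \<noteq> b" unfolding e_def using not_less_Least by blast
  ultimately show ?thesis by blast
qed

definition wdw :: "(sym_seq \<Rightarrow> real) \<Rightarrow> (nat \<Rightarrow> real) \<Rightarrow> (nat \<Rightarrow> real) \<Rightarrow> bool" where
  "wdw H H0 H1 \<longleftrightarrow> (\<forall>x. H x \<ge> 0) \<and> (\<forall>x. (x 0 = x 1) \<longrightarrow> H x = 0) \<and>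
     (\<forall>n\<ge>1. H0 n \<ge> 0 \<and> H1 n \<ge> 0) \<and>
     (\<forall>n\<ge>1. \<forall>x. (\<not> x 0 \<and> (\<forall>j\<in>{1..n}. x j) \<and> \<not> x (Suc n)) \<longrightarrow> H x = H0 n) \<and>
     (\<forall>n\<ge>1. \<forall>x. (x 0 \<and> (\<forall>j\<in>{1..n}. \<not> x j) \<and> x (Suc n)) \<longrightarrow> H x = H1 n) \<and>
     H0 \<longlonglongrightarrow> H (\<lambda>j. j \<noteq> 0) \<and> H1 \<longlonglongrightarrow> H (\<lambda>j. j = 0)"

definition flip :: "sym_seq \<Rightarrow> sym_seq" where "flip x = (\<lambda>j. \<not> x j)"

lemma flip_flip[simp]: "flip (flip x) = x" by (simp add: flip_def)
lemma flip_zeros[simp]: "flip zeros = ones" and flip_ones[simp]: "flip ones = zeros"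
  by (auto simp: flip_def zeros_def ones_def)

lemma wdw_flip: "wdw H H0 H1 \<Longrightarrow> wdw (H \<circ> flip) H1 H0"
  unfolding wdw_def
proof (elim conjE, intro conjI)
  assume a: "\<forall>n\<ge>1. \<forall>x. (\<not> x 0 \<and> (\<forall>j\<in>{1..n}. x j) \<and> \<not> x (Suc n)) \<longrightarrow> H x = H0 n"
  show "\<forall>n\<ge>1. \<forall>x. x 0 \<and> (\<forall>j\<in>{1..n}. \<not> x j) \<and> x (Suc n) \<longrightarrow> (H \<circ> flip) x = H0 n"
    using a by (auto simp: flip_def)
next
  assume a: "\<forall>n\<ge>1. \<forall>x. (x 0 \<and> (\<forall>j\<in>{1..n}. \<not> x j) \<and> x (Suc n)) \<longrightarrow> H x = H1 n"
  show "\<forall>n\<ge>1. \<forall>x. \<not> x 0 \<and> (\<forall>j\<in>{1..n}. x j) \<and> \<not> x (Suc n) \<longrightarrow> (H \<circ> flip) x = H1 n"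
    using a by (auto simp: flip_def)
next
  assume "H0 \<longlonglongrightarrow> H (\<lambda>j. j \<noteq> 0)"
  moreover have "flip (\<lambda>j. j = 0) = (\<lambda>j. j \<noteq> 0)" by (simp add: flip_def)
  ultimately show "H0 \<longlonglongrightarrow> (H \<circ> flip) (\<lambda>j. j = 0)" by simp
next
  assume "H1 \<longlonglongrightarrow> H (\<lambda>j. j = 0)"
  moreover have "flip (\<lambda>j. j \<noteq> 0) = (\<lambda>j. j = 0)" by (simp add: flip_def)
  ultimately show "H1 \<longlonglongrightarrow> (H \<circ> flip) (\<lambda>j. j \<noteq> 0)" by simp
qed (auto simp: flip_def)

lemma Hbar_zero:
  assumes "wdw H H0 H1" shows "Hbar H = 0"
proof -
  have "(INF x. (1 / real n) * (\<Sum>k<n. H ((shift ^^ k) x))) = 0" for n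
  proof (rule cInf_eq_minimum)
    show "0 \<in> range (\<lambda>x. (1 / real n) * (\<Sum>k<n. H ((shift ^^ k) x)))"
    proof
      have "H zeros = 0" using assms by (auto simp: wdw_def zeros_def)
      moreover have "(shift ^^ k) zeros = zeros" for k by (simp add: shift_pow zeros_def)
      ultimately show "0 = (1 / real n) * (\<Sum>k<n. H ((shift ^^ k) zeros))" by simp
    qed simp
  next
    fix y assume "y \<in> range (\<lambda>x. (1 / real n) * (\<Sum>k<n. H ((shift ^^ k) x)))"
    then show "0 \<le> y" using assms by (auto simp: wdw_def intro!: sum_nonneg divide_nonneg_nonneg)
  qed
  then show ?thesis unfolding Hbar_def by simp
qed



lemma open_cyl: "open {f::sym_seq. agree p f a}"
proof -
  have "open {f::sym_seq. \<forall>i\<in>{..<p}. f (id i) \<in> {a i}}"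
    by (rule product_topology_basis') (auto intro: open_discrete)
  moreover have "{f::sym_seq. \<forall>i\<in>{..<p}. f (id i) \<in> {a i}} = {f. agree p f a}"
    by (auto simp: agree_def)
  ultimately show ?thesis by simp
qed

lemma cyl_in_open:
  assumes "open (U::sym_seq set)" "a \<in> U"
  shows "\<exists>p. {f. agree p f a} \<subseteq> U"
proof -
  from assms have "openin (product_topology (\<lambda>i. euclidean) UNIV) U" by (simp add: open_fun_def)
  from product_topology_open_contains_basis[OF this assms(2)] obtain X where
    X: "a \<in> (\<Pi>\<^sub>E i\<in>UNIV. X i)" "\<forall>i. openin euclidean (X i)"
       "finite {i. X i \<noteq> topspace euclidean}" "(\<Pi>\<^sub>E i\<in>UNIV. X i) \<subseteq> U" by blast
  from finite_nat_bounded[OF X(3)] obtain p where p: "{i. X i \<noteq> topspace euclidean} \<subseteq> {..<p}" by blast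
  have "{f. agree p f a} \<subseteq> (\<Pi>\<^sub>E i\<in>UNIV. X i)"
  proof
    fix f assume f: "f \<in> {f. agree p f a}"
    show "f \<in> (\<Pi>\<^sub>E i\<in>UNIV. X i)"
    proof (simp add: PiE_iff, intro allI)
      fix i show "f i \<in> X i"
      proof (cases "i < p")
        case True then show ?thesis using f X(1) by (auto simp: agree_def PiE_iff)
      next
        case False then have "X i = UNIV" using p by auto
        then show ?thesis by simp
      qed
    qed
  qed
  then show ?thesis using X(4) by blast
qed

lemma eventually_at_cyl:
  "eventually P (at (a::sym_seq)) \<longleftrightarrow> (\<exists>p. \<forall>x. agree p x a \<and> x \<noteq> a \<longrightarrow> P x)"
proof
  assume "eventually P (at a)"
  then obtain S where S: "open S" "a \<in> S" "\<forall>x\<in>S. x \<noteq> a \<longrightarrow> P x"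
    unfolding eventually_at_topological by auto
  from cyl_in_open[OF S(1,2)] S(3) show "\<exists>p. \<forall>x. agree p x a \<and> x \<noteq> a \<longrightarrow> P x" by blast
next
  assume "\<exists>p. \<forall>x. agree p x a \<and> x \<noteq> a \<longrightarrow> P x"
  then obtain p where "\<forall>x. agree p x a \<and> x \<noteq> a \<longrightarrow> P x" by blast
  moreover have "a \<in> {f. agree p f a}" by (simp add: agree_def)
  ultimately show "eventually P (at a)"
    unfolding eventually_at_topological using open_cyl by blast
qed

lemma tendsto_seq:
  fixes X :: "nat \<Rightarrow> sym_seq"
  assumes "\<And>j. eventually (\<lambda>m. X m j = y j) sequentially"
  shows "X \<longlonglongrightarrow> y"
proof (rule topological_tendstoI)
  fix S assume "open S" "y \<in> S"
  from cyl_in_open[OF this] obtain p where p: "{f. agree p f y} \<subseteq> S" by blast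
  have "eventually (\<lambda>m. \<forall>j\<in>{..<p}. X m j = y j) sequentially"
    by (rule eventually_ball_finite) (use assms in auto)
  then show "eventually (\<lambda>m. X m \<in> S) sequentially"
    by eventually_elim (use p in \<open>auto simp: agree_def\<close>)
qed

lemma Liminf_at_cyl:
  fixes f :: "sym_seq \<Rightarrow> ereal"
  assumes "\<exists>p. \<forall>x. agree p x a \<and> x \<noteq> a \<longrightarrow> ereal c \<le> f x"
    and "\<And>p e. e > 0 \<Longrightarrow> \<exists>x. agree p x a \<and> x \<noteq> a \<and> f x \<le> ereal (c + e)"
  shows "Liminf (at a) f = ereal c"
proof (rule antisym)
  show "ereal c \<le> Liminf (at a) f"
    unfolding le_Liminf_iff
  proof (intro allI impI)
    fix y assume "y < ereal c"
    with assms(1) show "eventually (\<lambda>x. y < f x) (at a)"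
      unfolding eventually_at_cyl by (meson less_le_trans)
  qed
next
  show "Liminf (at a) f \<le> ereal c"
    unfolding Liminf_def
  proof (rule SUP_least)
    fix P assume "P \<in> {P. eventually P (at a)}"
    then obtain p where p: "\<forall>x. agree p x a \<and> x \<noteq> a \<longrightarrow> P x"
      unfolding eventually_at_cyl by auto
    show "(INF x\<in>Collect P. f x) \<le> ereal c"
    proof (rule ereal_le_epsilon2)
      fix e :: real assume "0 < e"
      from assms(2)[OF this, of p] obtain x where x: "agree p x a" "x \<noteq> a" "f x \<le> ereal (c + e)" by blast
      then have "(INF x\<in>Collect P. f x) \<le> f x" using p by (intro INF_lower) auto
      also have "\<dots> \<le> ereal c + ereal e" using x by simp
      finally show "(INF x\<in>Collect P. f x) \<le> ereal c + ereal e" .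
    qed
  qed
qed

lemma rdw_wdw:
  assumes "reduced_double_well H H0 H1" shows "wdw H H0 H1"
proof -
  have cont: "continuous_on UNIV H"
    using assms unfolding reduced_double_well_def by simp
  have b0: "\<forall>n\<ge>1. \<forall>x. (\<not> x 0 \<and> (\<forall>j\<in>{1..n}. x j) \<and> \<not> x (Suc n)) \<longrightarrow> H x = H0 n"
   and b1: "\<forall>n\<ge>1. \<forall>x. (x 0 \<and> (\<forall>j\<in>{1..n}. \<not> x j) \<and> x (Suc n)) \<longrightarrow> H x = H1 n"
   and nn: "\<forall>x. H x \<ge> 0"
    using assms unfolding reduced_double_well_def by auto
  define X where "X m = (\<lambda>j::nat. 0 < j \<and> j \<le> m)" for m
  define Y where "Y m = (\<lambda>j::nat. \<not> (0 < j \<and> j \<le> m))" for m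
  have "X \<longlonglongrightarrow> (\<lambda>j. j \<noteq> 0)"
  proof (rule tendsto_seq)
    fix j show "eventually (\<lambda>m. X m j = (j \<noteq> 0)) sequentially"
      using eventually_ge_at_top[of j] by eventually_elim (auto simp: X_def)
  qed
  then have t0: "(\<lambda>m. H (X m)) \<longlonglongrightarrow> H (\<lambda>j. j \<noteq> 0)" using continuous_on_tendsto_compose[OF cont] by auto
  have "Y \<longlonglongrightarrow> (\<lambda>j. j = 0)"
  proof (rule tendsto_seq)
    fix j show "eventually (\<lambda>m. Y m j = (j = 0)) sequentially"
      using eventually_ge_at_top[of j] by eventually_elim (auto simp: Y_def)
  qed
  then have t1: "(\<lambda>m. H (Y m)) \<longlonglongrightarrow> H (\<lambda>j. j = 0)" using continuous_on_tendsto_compose[OF cont] by auto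
  have eq0: "H (X m) = H0 m" if "m \<ge> 1" for m using b0 that by (auto simp: X_def)
  have eq1: "H (Y m) = H1 m" if "m \<ge> 1" for m using b1 that by (auto simp: Y_def)
  have "H0 \<longlonglongrightarrow> H (\<lambda>j. j \<noteq> 0)"
    by (rule Lim_transform_eventually[OF t0]) (rule eventually_sequentiallyI[of 1], simp add: eq0)
  moreover have "H1 \<longlonglongrightarrow> H (\<lambda>j. j = 0)"
    by (rule Lim_transform_eventually[OF t1]) (rule eventually_sequentiallyI[of 1], simp add: eq1)
  moreover have "H0 n \<ge> 0 \<and> H1 n \<ge> 0" if "n \<ge> 1" for n
    using eq0[OF that] eq1[OF that] nn by metis
  ultimately show ?thesis using assms unfolding reduced_double_well_def wdw_def by auto
qed



abbreviation cost :: "(sym_seq \<Rightarrow> real) \<Rightarrow> nat \<Rightarrow> sym_seq \<Rightarrow> real" where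
  "cost H k z \<equiv> \<Sum>i<k. H ((shift ^^ i) z)"

lemma S_mono_n: "N \<le> N' \<Longrightarrow> S_peierls H p N x y \<le> S_peierls H p N' x y"
  unfolding S_peierls_def by (rule INF_superset_mono) auto

lemma agree_mono: "agree p' a b \<Longrightarrow> p \<le> p' \<Longrightarrow> agree p a b"
  by (auto simp: agree_def)

lemma S_mono_p: "p \<le> p' \<Longrightarrow> S_peierls H p N x y \<le> S_peierls H p' N x y"
  unfolding S_peierls_def by (rule INF_superset_mono) (auto intro: agree_mono)

lemma peierls_SUP: "peierls H x y = (SUP p. SUP N. S_peierls H p N x y)"
proof -
  have "(\<lambda>N. S_peierls H p N x y) \<longlonglongrightarrow> (SUP N. S_peierls H p N x y)" for p
    by (rule LIMSEQ_SUP) (auto simp: incseq_def intro: S_mono_n)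
  then have 1: "lim (\<lambda>N. S_peierls H p N x y) = (SUP N. S_peierls H p N x y)" for p
    by (rule limI)
  have "(\<lambda>p. SUP N. S_peierls H p N x y) \<longlonglongrightarrow> (SUP p. SUP N. S_peierls H p N x y)"
    by (rule LIMSEQ_SUP) (auto simp: incseq_def intro!: SUP_mono S_mono_p)
  then show ?thesis unfolding peierls_def 1 by (rule limI)
qed

lemma peierls_leI:
  assumes w: "wdw H H0 H1"
    and W: "\<And>p N e. e > 0 \<Longrightarrow> \<exists>k z. N \<le> k \<and> agree p z x \<and> agree p ((shift ^^ k) z) y \<and> cost H k z \<le> c + e"
  shows "peierls H x y \<le> ereal c"
proof (rule ereal_le_epsilon2)
  fix e :: real assume e: "0 < e"
  have "S_peierls H p N x y \<le> ereal c + ereal e" for p N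
  proof -
    from W[OF e, of N p] obtain k z where kz: "N \<le> k" "agree p z x" "agree p ((shift ^^ k) z) y" "cost H k z \<le> c + e" by blast
    have "S_peierls H p N x y \<le> ereal (\<Sum>i<fst (k, z). H ((shift ^^ i) (snd (k, z))) - Hbar H)"
      unfolding S_peierls_def by (rule INF_lower) (use kz in auto)
    also have "\<dots> = ereal (cost H k z)" using Hbar_zero[OF w] by simp
    also have "\<dots> \<le> ereal c + ereal e" using kz by simp
    finally show ?thesis .
  qed
  then show "peierls H x y \<le> ereal c + ereal e" unfolding peierls_SUP by (intro SUP_least) auto
qed

lemma peierls_geI:
  assumes w: "wdw H H0 H1"
    and B: "\<And>e. e > 0 \<Longrightarrow> \<exists>p. \<forall>k z. agree p z x \<and> agree p ((shift ^^ k) z) y \<longrightarrow> c - e \<le> cost H k z"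
  shows "ereal c \<le> peierls H x y"
proof (rule ereal_le_epsilon2)
  fix e :: real assume e: "0 < e"
  from B[OF e] obtain p where p: "\<forall>k z. agree p z x \<and> agree p ((shift ^^ k) z) y \<longrightarrow> c - e \<le> cost H k z" by blast
  have "ereal (c - e) \<le> S_peierls H p 0 x y"
    unfolding S_peierls_def
  proof (rule INF_greatest)
    fix kz assume "kz \<in> {(k, z). 0 \<le> k \<and> agree p z x \<and> agree p ((shift ^^ k) z) y}"
    then show "ereal (c - e) \<le> ereal (\<Sum>i<fst kz. H ((shift ^^ i) (snd kz)) - Hbar H)"
      using p Hbar_zero[OF w] by auto
  qed
  also have "\<dots> \<le> peierls H x y" unfolding peierls_SUP
    by (rule order_trans[OF _ SUP_upper[of p]]) (auto intro: SUP_upper)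
  finally have "ereal (c - e) \<le> peierls H x y" .
  then have "ereal (c - e) + ereal e \<le> peierls H x y + ereal e" by (rule add_right_mono)
  then show "ereal c \<le> peierls H x y + ereal e" by simp
qed

lemma cost_ge1:
  assumes w: "wdw H H0 H1" and "s < k"
  shows "H ((shift ^^ s) z) \<le> cost H k z"
  by (rule member_le_sum) (use assms in \<open>auto simp: wdw_def\<close>)

lemma cost_ge2:
  assumes w: "wdw H H0 H1" and "s < k" "t < k" "s \<noteq> t"
  shows "H ((shift ^^ s) z) + H ((shift ^^ t) z) \<le> cost H k z"
proof -
  have "H ((shift ^^ s) z) + H ((shift ^^ t) z) = (\<Sum>i\<in>{s,t}. H ((shift ^^ i) z))" using assms by simp
  also have "\<dots> \<le> cost H k z" by (rule sum_mono2) (use assms in \<open>auto simp: wdw_def\<close>)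
  finally show ?thesis .
qed

lemma cost_sparse:
  assumes w: "wdw H H0 H1" and A: "A \<subseteq> {..<k}" and z: "\<And>i. i < k \<Longrightarrow> i \<notin> A \<Longrightarrow> z i = z (Suc i)"
  shows "cost H k z = (\<Sum>i\<in>A. H ((shift ^^ i) z))"
proof -
  have "\<forall>i\<in>{..<k} - A. H ((shift ^^ i) z) = 0"
  proof
    fix i assume "i \<in> {..<k} - A"
    then have "((shift ^^ i) z) 0 = ((shift ^^ i) z) 1" using z by (simp add: shift_pow)
    then show "H ((shift ^^ i) z) = 0" using w by (simp add: wdw_def)
  qed
  from sum.mono_neutral_left[OF _ A this] show ?thesis by simp
qed

lemma H_block0:
  assumes w: "wdw H H0 H1" and "m \<ge> 1" "\<not> z s" "\<And>j. s < j \<Longrightarrow> j \<le> s + m \<Longrightarrow> z j" "\<not> z (s + m + 1)"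
  shows "H ((shift ^^ s) z) = H0 m"
proof -
  have "\<forall>n\<ge>1. \<forall>x. (\<not> x 0 \<and> (\<forall>j\<in>{1..n}. x j) \<and> \<not> x (Suc n)) \<longrightarrow> H x = H0 n"
    using w by (simp add: wdw_def)
  then show ?thesis using assms(2-5) by (auto simp: shift_pow)
qed

lemma H_block1:
  assumes w: "wdw H H0 H1" and "m \<ge> 1" "z s" "\<And>j. s < j \<Longrightarrow> j \<le> s + m \<Longrightarrow> \<not> z j" "z (s + m + 1)"
  shows "H ((shift ^^ s) z) = H1 m"
proof -
  have "\<forall>n\<ge>1. \<forall>x. (x 0 \<and> (\<forall>j\<in>{1..n}. \<not> x j) \<and> x (Suc n)) \<longrightarrow> H x = H1 n"
    using w by (simp add: wdw_def)
  then show ?thesis using assms(2-5) by (auto simp: shift_pow)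
qed

lemma H_tail0:
  assumes "\<not> z s" "\<And>j. s < j \<Longrightarrow> z j"
  shows "(shift ^^ s) z = (\<lambda>j. j \<noteq> 0)"
proof (rule ext)
  fix j show "(shift ^^ s) z j = (j \<noteq> 0)"
    using assms(1) assms(2)[of "s+j"] by (cases "j = 0") (auto simp: shift_pow)
qed

lemma H_tail1:
  assumes "z s" "\<And>j. s < j \<Longrightarrow> \<not> z j"
  shows "(shift ^^ s) z = (\<lambda>j. j = 0)"
proof (rule ext)
  fix j show "(shift ^^ s) z j = (j = 0)"
    using assms(1) assms(2)[of "s+j"] by (cases "j = 0") (auto simp: shift_pow)
qed



lemma cost_nonneg: "wdw H H0 H1 \<Longrightarrow> 0 \<le> cost H k z"
  by (rule sum_nonneg) (simp add: wdw_def)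

lemma item1:
  assumes w: "wdw H H0 H1" and x0: "\<not> x 0"
  shows "peierls H zeros x = 0"
proof (rule antisym)
  show "peierls H zeros x \<le> 0" unfolding zero_ereal_def
  proof (rule peierls_leI[OF w])
    fix p N :: nat and e :: real assume e: "e > 0"
    define a where "a = max N p"
    define z where "z = (\<lambda>j. a \<le> j \<and> x (j - a))"
    have "(shift ^^ a) z = x" by (auto simp: shift_pow z_def)
    moreover have "agree p z zeros" by (auto simp: agree_def z_def zeros_def a_def)
    moreover have "cost H a z = (\<Sum>i\<in>{}. H ((shift ^^ i) z))"
      by (rule cost_sparse[OF w]) (use x0 in \<open>auto simp: z_def\<close>)
    ultimately show "\<exists>k z. N \<le> k \<and> agree p z zeros \<and> agree p ((shift ^^ k) z) x \<and> cost H k z \<le> 0 + e"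
      using e by (intro exI[of _ a] exI[of _ z]) (auto simp: a_def agree_def)
  qed
next
  show "0 \<le> peierls H zeros x" unfolding zero_ereal_def
  proof (rule peierls_geI[OF w])
    fix e :: real assume e: "e > 0"
    show "\<exists>p. \<forall>k z. agree p z zeros \<and> agree p ((shift ^^ k) z) x \<longrightarrow> 0 - e \<le> cost H k z"
    proof (intro exI[of _ 0] allI impI)
      fix k z
      have "0 \<le> cost H k z" by (rule cost_nonneg[OF w])
      then show "0 - e \<le> cost H k z" using e by linarith
    qed
  qed
qed


lemma item2:
  assumes w: "wdw H H0 H1" and n: "n \<ge> 1" and x: "\<And>j. j < n \<Longrightarrow> x j" "\<not> x n"
  shows "peierls H zeros x = ereal (INF k \<in> {n..}. H0 k)"
proof -
  define c where "c = (INF k \<in> {n..}. H0 k)"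
  have bdd: "bdd_below (H0 ` {n..})"
    using w n unfolding wdw_def by (intro bdd_belowI[of _ 0]) auto
  show ?thesis unfolding c_def[symmetric]
  proof (rule antisym)
    show "peierls H zeros x \<le> ereal c"
    proof (rule peierls_leI[OF w])
      fix p N :: nat and e :: real assume e: "e > 0"
      have "c < c + e" using e by simp
      then obtain m where m: "m \<ge> n" "H0 m < c + e"
        unfolding c_def using bdd by (subst (asm) cInf_less_iff) auto
      define a where "a = max N p + 1"
      define k where "k = a + m - n"
      define z where "z = (\<lambda>j. if j < a then False else if j < k then True else x (j - k))"
      have ka: "a \<le> k" using m by (simp add: k_def)
      have "(shift ^^ k) z = x" using ka by (auto simp: shift_pow z_def)
      moreover have "agree p z zeros" by (auto simp: agree_def z_def zeros_def a_def)
      moreover have "cost H k z = (\<Sum>i\<in>{a-1}. H ((shift ^^ i) z))"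
      proof (rule cost_sparse[OF w])
        show "{a - 1} \<subseteq> {..<k}" using ka by (auto simp: a_def)
      next
        fix i assume i: "i < k" "i \<notin> {a - 1}"
        show "z i = z (Suc i)"
        proof (cases "i < a")
          case True then show ?thesis using i by (auto simp: z_def a_def)
        next
          case False then show ?thesis using i x n by (auto simp: z_def)
        qed
      qed
      moreover have "H ((shift ^^ (a-1)) z) = H0 m"
      proof (rule H_block0[OF w])
        show "1 \<le> m" using m n by simp
        show "\<not> z (a - 1)" by (simp add: z_def a_def)
        show "\<not> z (a - 1 + m + 1)" using x(2) m by (auto simp: z_def a_def k_def)
        fix j assume j: "a - 1 < j" "j \<le> a - 1 + m"
        then show "z j" using x(1) m by (auto simp: z_def a_def k_def)
      qed
      moreover have "N \<le> k" using ka by (simp add: a_def)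
      ultimately show "\<exists>k z. N \<le> k \<and> agree p z zeros \<and> agree p ((shift ^^ k) z) x \<and> cost H k z \<le> c + e"
        using m by (intro exI[of _ k] exI[of _ z]) (auto simp: agree_def)
    qed
  next
    show "ereal c \<le> peierls H zeros x"
    proof (rule peierls_geI[OF w])
      fix e :: real assume e: "e > 0"
      show "\<exists>p. \<forall>k z. agree p z zeros \<and> agree p ((shift ^^ k) z) x \<longrightarrow> c - e \<le> cost H k z"
      proof (intro exI[of _ "n+1"] allI impI, elim conjE)
        fix k z assume a1: "agree (n+1) z zeros" and a2: "agree (n+1) ((shift ^^ k) z) x"
        have z0: "\<not> z 0" using a1 by (auto simp: agree_def zeros_def)
        have zk: "z (k + j) = x j" if "j \<le> n" for j using a2 that by (auto simp: agree_def shift_pow)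
        have "z k \<noteq> False" using zk[of 0] x n by simp
        have "\<exists>t. 0 \<le> t \<and> t < k \<and> z t = False \<and> (\<forall>j. t < j \<and> j \<le> k \<longrightarrow> z j \<noteq> False)"
          by (rule last_change) (use z0 \<open>z k \<noteq> False\<close> in auto)
        then obtain t where t: "t < k" "\<not> z t" "\<forall>j. t < j \<and> j \<le> k \<longrightarrow> z j"
          by auto
        define m where "m = k + n - 1 - t"
        have "H ((shift ^^ t) z) = H0 m"
        proof (rule H_block0[OF w])
          show "1 \<le> m" using t n by (simp add: m_def)
          show "\<not> z t" by fact
          have "k + n = t + m + 1" using t n by (simp add: m_def)
          then show "\<not> z (t + m + 1)" using zk[of n] x(2) by simp
          fix j assume j: "t < j" "j \<le> t + m"
          show "z j"
          proof (cases "j \<le> k")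
            case True then show ?thesis using t j by auto
          next
            case False
            then have "j = k + (j - k)" "j - k < n" using j t n by (auto simp: m_def)
            then show ?thesis using zk[of "j-k"] x(1)[of "j-k"] by simp
          qed
        qed
        moreover have "m \<ge> n" using t by (simp add: m_def)
        then have "c \<le> H0 m" unfolding c_def using bdd by (intro cINF_lower) auto
        ultimately show "c - e \<le> cost H k z" using cost_ge1[OF w t(1), of z] e by linarith
      qed
    qed
  qed
qed

lemma item2ones:
  assumes w: "wdw H H0 H1"
  shows "peierls H zeros ones = ereal (H (\<lambda>j. j \<noteq> 0))"
proof (rule antisym)
  define G where "G = H (\<lambda>j. j \<noteq> 0)"
  show "peierls H zeros ones \<le> ereal (H (\<lambda>j. j \<noteq> 0))"
  proof (rule peierls_leI[OF w])
    fix p N :: nat and e :: real assume e: "e > 0"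
    define a where "a = max N p + 1"
    define z where "z = (\<lambda>j. a \<le> j)"
    have "(shift ^^ a) z = ones" by (auto simp: shift_pow z_def ones_def)
    moreover have "agree p z zeros" by (auto simp: agree_def z_def zeros_def a_def)
    moreover have "cost H a z = (\<Sum>i\<in>{a-1}. H ((shift ^^ i) z))"
      by (rule cost_sparse[OF w]) (auto simp: z_def a_def)
    moreover have "(shift ^^ (a-1)) z = (\<lambda>j. j \<noteq> 0)"
      by (rule H_tail0) (auto simp: z_def a_def)
    ultimately show "\<exists>k z. N \<le> k \<and> agree p z zeros \<and> agree p ((shift ^^ k) z) ones \<and> cost H k z \<le> H (\<lambda>j. j \<noteq> 0) + e"
      using e by (intro exI[of _ a] exI[of _ z]) (auto simp: a_def agree_def)
  qed
next
  show "ereal (H (\<lambda>j. j \<noteq> 0)) \<le> peierls H zeros ones"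
  proof (rule peierls_geI[OF w])
    fix e :: real assume e: "e > 0"
    have "H0 \<longlonglongrightarrow> H (\<lambda>j. j \<noteq> 0)" using w by (simp add: wdw_def)
    from LIMSEQ_D[OF this e] obtain P where P: "\<And>m. m \<ge> P \<Longrightarrow> norm (H0 m - H (\<lambda>j. j \<noteq> 0)) < e" by blast
    show "\<exists>p. \<forall>k z. agree p z zeros \<and> agree p ((shift ^^ k) z) ones \<longrightarrow> H (\<lambda>j. j \<noteq> 0) - e \<le> cost H k z"
    proof (intro exI[of _ "P+1"] allI impI, elim conjE)
      fix k z assume a1: "agree (P+1) z zeros" and a2: "agree (P+1) ((shift ^^ k) z) ones"
      have z0: "\<not> z 0" using a1 by (auto simp: agree_def zeros_def)
      have zk: "z (k + j)" if "j \<le> P" for j using a2 that by (auto simp: agree_def shift_pow ones_def)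
      have "\<exists>t. 0 \<le> t \<and> t < k \<and> z t = False \<and> (\<forall>j. t < j \<and> j \<le> k \<longrightarrow> z j \<noteq> False)"
        by (rule last_change) (use z0 zk[of 0] in auto)
      then obtain t where t: "t < k" "\<not> z t" "\<forall>j. t < j \<and> j \<le> k \<longrightarrow> z j" by auto
      have ztrue: "z j" if "t < j" "j \<le> k + P" for j
      proof (cases "j \<le> k")
        case True then show ?thesis using t that by auto
      next
        case False then have "j = k + (j - k)" "j - k \<le> P" using that by auto
        then show ?thesis using zk[of "j-k"] by simp
      qed
      have "H (\<lambda>j. j \<noteq> 0) - e \<le> H ((shift ^^ t) z)"
      proof (cases "\<forall>j>t. z j")
        case True
        then have "(shift ^^ t) z = (\<lambda>j. j \<noteq> 0)" using t by (intro H_tail0) auto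
        then show ?thesis using e by simp
      next
        case False
        then have "\<exists>e>t. z e = False" by auto
        from first_change[OF this] obtain e' where e': "e' > t" "\<not> z e'" "\<forall>j. t < j \<and> j < e' \<longrightarrow> z j" by auto
        have "e' > k + P" using ztrue e' by (meson not_le)
        define m where "m = e' - 1 - t"
        have m: "m \<ge> P" "m \<ge> 1" using \<open>e' > k + P\<close> t by (auto simp: m_def)
        have "H ((shift ^^ t) z) = H0 m"
        proof (rule H_block0[OF w m(2), of z t, OF t(2)])
          show "\<not> z (t + m + 1)" using e' m by (simp add: m_def)
          fix j assume "t < j" "j \<le> t + m" then show "z j" using e' by (auto simp: m_def)
        qed
        then show ?thesis using P[OF m(1)] by simp
      qed
      then show "H (\<lambda>j. j \<noteq> 0) - e \<le> cost H k z" using cost_ge1[OF w t(1), of z] by linarith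
    qed
  qed
qed

lemma Hmin_bdd: "wdw H H0 H1 \<Longrightarrow> bdd_below (H0 ` {1..})"
  unfolding wdw_def by (intro bdd_belowI[of _ 0]) auto

lemma item3_lower:
  assumes w: "wdw H H0 H1" and x0: "\<not> x 0" and xz: "x \<noteq> zeros"
  shows "ereal (H_min H0 + H (\<lambda>j. j = 0)) \<le> peierls H x zeros"
proof (rule peierls_geI[OF w])
  fix e :: real assume e: "e > 0"
  obtain a where xa: "x a" using xz by (auto simp: zeros_def)
  have a1: "a \<ge> 1" using xa x0 by (cases a) auto
  have "H1 \<longlonglongrightarrow> H (\<lambda>j. j = 0)" using w by (simp add: wdw_def)
  from LIMSEQ_D[OF this e] obtain P where P: "\<And>m. m \<ge> P \<Longrightarrow> norm (H1 m - H (\<lambda>j. j = 0)) < e" by blast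
  define p where "p = P + a + 1"
  show "\<exists>p. \<forall>k z. agree p z x \<and> agree p ((shift ^^ k) z) zeros \<longrightarrow> H_min H0 + H (\<lambda>j. j = 0) - e \<le> cost H k z"
  proof (intro exI[of _ p] allI impI, elim conjE)
    fix k z assume b1: "agree p z x" and b2: "agree p ((shift ^^ k) z) zeros"
    have z0: "\<not> z 0" using b1 x0 by (auto simp: agree_def p_def)
    have za: "z a" using b1 xa by (auto simp: agree_def p_def)
    have zk: "\<not> z (k + j)" if "j < p" for j using b2 that by (auto simp: agree_def shift_pow zeros_def)
    have ak: "a < k"
    proof (rule ccontr)
      assume "\<not> a < k"
      then have "a = k + (a - k)" "a - k < p" by (auto simp: p_def)
      then show False using zk[of "a-k"] za by simp
    qed
    have "\<exists>t. 0 \<le> t \<and> t < a \<and> z t = False \<and> (\<forall>j. t < j \<and> j \<le> a \<longrightarrow> z j \<noteq> False)"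
      by (rule last_change) (use z0 za in auto)
    then obtain t0 where t0: "t0 < a" "\<not> z t0" "\<forall>j. t0 < j \<and> j \<le> a \<longrightarrow> z j" by auto
    have "\<exists>e>t0. z e = False" using zk[of 0] ak t0 by (intro exI[of _ k]) (auto simp: p_def)
    from first_change[OF this] obtain e0 where e0: "e0 > t0" "\<not> z e0" "\<forall>j. t0 < j \<and> j < e0 \<longrightarrow> z j" by auto
    define m0 where "m0 = e0 - 1 - t0"
    have "e0 > a" using t0 e0 by (meson not_le)
    then have m0: "m0 \<ge> 1" using t0 by (auto simp: m0_def)
    have "H ((shift ^^ t0) z) = H0 m0"
    proof (rule H_block0[OF w m0, of z t0, OF t0(2)])
      show "\<not> z (t0 + m0 + 1)" using e0 m0 by (simp add: m0_def)
      fix j assume "t0 < j" "j \<le> t0 + m0" then show "z j" using e0 by (auto simp: m0_def)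
    qed
    moreover have "H_min H0 \<le> H0 m0" unfolding H_min_def using Hmin_bdd[OF w] m0 by (intro cINF_lower) auto
    ultimately have c0: "H_min H0 \<le> H ((shift ^^ t0) z)" by simp
    have "\<exists>t. a \<le> t \<and> t < k \<and> z t = True \<and> (\<forall>j. t < j \<and> j \<le> k \<longrightarrow> z j \<noteq> True)"
      by (rule last_change) (use za zk[of 0] ak in \<open>auto simp: p_def\<close>)
    then obtain t1 where t1: "a \<le> t1" "t1 < k" "z t1" "\<forall>j. t1 < j \<and> j \<le> k \<longrightarrow> \<not> z j" by auto
    have zfalse: "\<not> z j" if "t1 < j" "j < k + p" for j
    proof (cases "j \<le> k")
      case True then show ?thesis using t1 that by auto
    next
      case False then have "j = k + (j - k)" "j - k < p" using that by auto
      then show ?thesis using zk[of "j-k"] by simp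
    qed
    have c1: "H (\<lambda>j. j = 0) - e \<le> H ((shift ^^ t1) z)"
    proof (cases "\<forall>j>t1. \<not> z j")
      case True
      then have "(shift ^^ t1) z = (\<lambda>j. j = 0)" using t1 by (intro H_tail1) auto
      then show ?thesis using e by simp
    next
      case False
      then have "\<exists>e>t1. z e = True" by auto
      from first_change[OF this] obtain e1 where e1: "e1 > t1" "z e1" "\<forall>j. t1 < j \<and> j < e1 \<longrightarrow> \<not> z j" by auto
      have "e1 \<ge> k + p" using zfalse e1 by (meson not_le)
      define m1 where "m1 = e1 - 1 - t1"
      have m1: "m1 \<ge> P" "m1 \<ge> 1" using \<open>e1 \<ge> k + p\<close> t1 by (auto simp: m1_def p_def)
      have "H ((shift ^^ t1) z) = H1 m1"
      proof (rule H_block1[OF w m1(2), of z t1, OF t1(3)])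
        show "z (t1 + m1 + 1)" using e1 m1 by (simp add: m1_def)
        fix j assume "t1 < j" "j \<le> t1 + m1" then show "\<not> z j" using e1 by (auto simp: m1_def)
      qed
      then show ?thesis using P[OF m1(1)] by simp
    qed
    have "H ((shift ^^ t0) z) + H ((shift ^^ t1) z) \<le> cost H k z"
      by (rule cost_ge2[OF w]) (use t0 t1 ak in auto)
    then show "H_min H0 + H (\<lambda>j. j = 0) - e \<le> cost H k z" using c0 c1 by linarith
  qed
qed

lemma item3_upper:
  assumes w: "wdw H H0 H1" and e: "e > 0"
  shows "\<exists>x. agree p x zeros \<and> x \<noteq> zeros \<and> peierls H x zeros \<le> ereal (H_min H0 + H (\<lambda>j. j = 0) + e)"
proof -
  have "H_min H0 < H_min H0 + e" using e by simp
  then obtain m where m: "m \<ge> 1" "H0 m < H_min H0 + e"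
    unfolding H_min_def using Hmin_bdd[OF w] by (subst (asm) cInf_less_iff) auto
  define a where "a = p + 1"
  define x where "x = (\<lambda>j. a \<le> j \<and> j < a + m)"
  have "agree p x zeros" by (auto simp: agree_def x_def zeros_def a_def)
  moreover have "x \<noteq> zeros" using m by (auto simp: x_def zeros_def fun_eq_iff intro!: exI[of _ a])
  moreover have "peierls H x zeros \<le> ereal (H0 m + H (\<lambda>j. j = 0))"
  proof (rule peierls_leI[OF w])
    fix q N :: nat and e' :: real assume e': "e' > 0"
    define k where "k = N + a + m"
    have "agree q ((shift ^^ k) x) zeros" by (auto simp: agree_def shift_pow x_def zeros_def k_def)
    moreover have "cost H k x = (\<Sum>i\<in>{a-1, a+m-1}. H ((shift ^^ i) x))"
      by (rule cost_sparse[OF w]) (use m in \<open>auto simp: x_def a_def k_def\<close>)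
    moreover have "H ((shift ^^ (a-1)) x) = H0 m"
    proof (rule H_block0[OF w m(1)])
      show "\<not> x (a - 1)" by (simp add: x_def a_def)
      show "\<not> x (a - 1 + m + 1)" by (simp add: x_def a_def)
      fix j assume "a - 1 < j" "j \<le> a - 1 + m" then show "x j" by (auto simp: x_def a_def)
    qed
    moreover have "(shift ^^ (a+m-1)) x = (\<lambda>j. j = 0)"
      by (rule H_tail1) (use m in \<open>auto simp: x_def a_def\<close>)
    moreover have "a - 1 \<noteq> a + m - 1" using m by (simp add: a_def)
    ultimately show "\<exists>k z. N \<le> k \<and> agree q z x \<and> agree q ((shift ^^ k) z) zeros \<and> cost H k z \<le> H0 m + H (\<lambda>j. j = 0) + e'"
      using e' by (intro exI[of _ k] exI[of _ x]) (auto simp: k_def agree_def)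
  qed
  ultimately show ?thesis using m by (intro exI[of _ x]) (auto intro: order_trans)
qed

lemma item3:
  assumes w: "wdw H H0 H1"
  shows "Liminf (at zeros) (\<lambda>x. peierls H x zeros) = ereal (H_min H0 + H (\<lambda>j. j = 0))"
proof (rule Liminf_at_cyl)
  show "\<exists>p. \<forall>x. agree p x zeros \<and> x \<noteq> zeros \<longrightarrow> ereal (H_min H0 + H (\<lambda>j. j = 0)) \<le> peierls H x zeros"
    by (intro exI[of _ 1] allI impI item3_lower[OF w]) (auto simp: agree_def zeros_def)
next
  fix p :: nat and e :: real assume "e > 0"
  from item3_upper[OF w this] show "\<exists>x. agree p x zeros \<and> x \<noteq> zeros \<and> peierls H x zeros \<le> ereal (H_min H0 + H (\<lambda>j. j = 0) + e)" .
qed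

lemma shift_flip: "(shift ^^ i) (flip z) = flip ((shift ^^ i) z)"
  by (simp add: shift_pow flip_def)

lemma agree_flip: "agree p (flip a) (flip b) \<longleftrightarrow> agree p a b"
  by (simp add: agree_def flip_def)

lemma S_flip_le:
  assumes w: "wdw H H0 H1"
  shows "S_peierls (H \<circ> flip) p N (flip a) (flip b) \<le> S_peierls H p N a b"
  unfolding S_peierls_def
proof (rule INF_greatest)
  fix kz assume kz: "kz \<in> {(k, z). N \<le> k \<and> agree p z a \<and> agree p ((shift ^^ k) z) b}"
  obtain k z where kz': "kz = (k, z)" by force
  have "(k, flip z) \<in> {(k, z). N \<le> k \<and> agree p z (flip a) \<and> agree p ((shift ^^ k) z) (flip b)}"
    using kz kz' by (auto simp: shift_flip agree_flip)
  then have "(INF kz\<in>{(k, z). N \<le> k \<and> agree p z (flip a) \<and> agree p ((shift ^^ k) z) (flip b)}.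
          ereal (\<Sum>i<fst kz. (H \<circ> flip) ((shift ^^ i) (snd kz)) - Hbar (H \<circ> flip)))
       \<le> ereal (\<Sum>i<k. (H \<circ> flip) ((shift ^^ i) (flip z)) - Hbar (H \<circ> flip))"
    by (rule INF_lower2) simp
  also have "\<dots> = ereal (\<Sum>i<fst kz. H ((shift ^^ i) (snd kz)) - Hbar H)"
    using Hbar_zero[OF w] Hbar_zero[OF wdw_flip[OF w]] kz' by (simp add: shift_flip)
  finally show "(INF kz\<in>{(k, z). N \<le> k \<and> agree p z (flip a) \<and> agree p ((shift ^^ k) z) (flip b)}.
          ereal (\<Sum>i<fst kz. (H \<circ> flip) ((shift ^^ i) (snd kz)) - Hbar (H \<circ> flip)))
       \<le> ereal (\<Sum>i<fst kz. H ((shift ^^ i) (snd kz)) - Hbar H)" .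
qed

lemma peierls_flip:
  assumes w: "wdw H H0 H1"
  shows "peierls (H \<circ> flip) (flip a) (flip b) = peierls H a b"
proof -
  have "S_peierls (H \<circ> flip) p N (flip a) (flip b) = S_peierls H p N a b" for p N
  proof (rule antisym)
    show "S_peierls (H \<circ> flip) p N (flip a) (flip b) \<le> S_peierls H p N a b" by (rule S_flip_le[OF w])
    have "(H \<circ> flip) \<circ> flip = H" by (auto simp: fun_eq_iff)
    then show "S_peierls H p N a b \<le> S_peierls (H \<circ> flip) p N (flip a) (flip b)"
      using S_flip_le[OF wdw_flip[OF w], of p N "flip a" "flip b"] by simp
  qed
  then show ?thesis unfolding peierls_def by simp
qed

theorem proposition3p3:
  fixes H :: "sym_seq \<Rightarrow> real" and H0 H1 :: "nat \<Rightarrow> real"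
  assumes "reduced_double_well H H0 H1"
  shows "((\<forall>x. \<not> x 0 \<longrightarrow> peierls H zeros x = 0) \<and> peierls H zeros zeros = 0)
    \<and> ((\<forall>n\<ge>1. \<forall>x. (\<forall>j<n. x j) \<and> \<not> x n \<longrightarrow>
            peierls H zeros x = ereal (INF k \<in> {n..}. H0 k))
         \<and> peierls H zeros ones = ereal (H_inf H0))
    \<and> Liminf (at zeros) (\<lambda>x. peierls H x zeros) = ereal (H_min H0 + H_inf H1)
    \<and> ((\<forall>x. x 0 \<longrightarrow> peierls H ones x = 0) \<and> peierls H ones ones = 0)
    \<and> ((\<forall>n\<ge>1. \<forall>x. (\<forall>j<n. \<not> x j) \<and> x n \<longrightarrow>
            peierls H ones x = ereal (INF k \<in> {n..}. H1 k))
         \<and> peierls H ones zeros = ereal (H_inf H1))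
    \<and> Liminf (at ones) (\<lambda>x. peierls H x ones) = ereal (H_min H1 + H_inf H0)"
proof -
  have w: "wdw H H0 H1" by (rule rdw_wdw[OF assms])
  have w': "wdw (H \<circ> flip) H1 H0" by (rule wdw_flip[OF w])
  have f0: "flip (\<lambda>j. j = 0) = (\<lambda>j. j \<noteq> 0)" and f1: "flip (\<lambda>j. j \<noteq> 0) = (\<lambda>j. j = 0)"
    by (auto simp: flip_def)
  have Hi0: "H_inf H0 = H (\<lambda>j. j \<noteq> 0)" unfolding H_inf_def
    by (rule limI) (use w in \<open>simp add: wdw_def\<close>)
  have Hi1: "H_inf H1 = H (\<lambda>j. j = 0)" unfolding H_inf_def
    by (rule limI) (use w in \<open>simp add: wdw_def\<close>)
  have pf: "peierls H a b = peierls (H \<circ> flip) (flip a) (flip b)" for a b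
    using peierls_flip[OF w] by simp
  have P1: "(\<forall>x. \<not> x 0 \<longrightarrow> peierls H zeros x = 0) \<and> peierls H zeros zeros = 0"
    using item1[OF w] by (auto simp: zeros_def)
  have P2: "(\<forall>n\<ge>1. \<forall>x. (\<forall>j<n. x j) \<and> \<not> x n \<longrightarrow> peierls H zeros x = ereal (INF k \<in> {n..}. H0 k))
         \<and> peierls H zeros ones = ereal (H_inf H0)"
    using item2[OF w] item2ones[OF w] Hi0 by auto
  have P3: "Liminf (at zeros) (\<lambda>x. peierls H x zeros) = ereal (H_min H0 + H_inf H1)"
    using item3[OF w] Hi1 by simp
  have P4: "(\<forall>x. x 0 \<longrightarrow> peierls H ones x = 0) \<and> peierls H ones ones = 0"
  proof -
    have "peierls H ones x = 0" if "x 0" for x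
    proof -
      have "\<not> flip x 0" using that by (simp add: flip_def)
      then show ?thesis using pf[of ones x] item1[OF w', of "flip x"] by simp
    qed
    then show ?thesis by (auto simp: ones_def)
  qed
  have P5: "(\<forall>n\<ge>1. \<forall>x. (\<forall>j<n. \<not> x j) \<and> x n \<longrightarrow> peierls H ones x = ereal (INF k \<in> {n..}. H1 k))
         \<and> peierls H ones zeros = ereal (H_inf H1)"
  proof (intro conjI allI impI)
    fix n :: nat and x assume n: "n \<ge> 1" and x: "(\<forall>j<n. \<not> x j) \<and> x n"
    show "peierls H ones x = ereal (INF k \<in> {n..}. H1 k)"
    proof -
      have "\<And>j. j < n \<Longrightarrow> flip x j" "\<not> flip x n" using x by (auto simp: flip_def)
      then show ?thesis using pf[of ones x] item2[OF w' n, of "flip x"] by simp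
    qed
  next
    show "peierls H ones zeros = ereal (H_inf H1)"
      using pf[of ones zeros] item2ones[OF w'] Hi1 f1 by simp
  qed
  have P6: "Liminf (at ones) (\<lambda>x. peierls H x ones) = ereal (H_min H1 + H_inf H0)"
    unfolding Hi0
  proof (rule Liminf_at_cyl)
    show "\<exists>p. \<forall>x. agree p x ones \<and> x \<noteq> ones \<longrightarrow> ereal (H_min H1 + H (\<lambda>j. j \<noteq> 0)) \<le> peierls H x ones"
    proof (intro exI[of _ 1] allI impI, elim conjE)
      fix x assume a: "agree 1 x ones" "x \<noteq> ones"
      have "\<not> flip x 0" using a by (auto simp: agree_def ones_def flip_def)
      moreover have "flip x \<noteq> zeros" using a by (metis flip_flip flip_zeros)
      ultimately have "ereal (H_min H1 + (H \<circ> flip) (\<lambda>j. j = 0)) \<le> peierls (H \<circ> flip) (flip x) zeros"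
        by (rule item3_lower[OF w'])
      then show "ereal (H_min H1 + H (\<lambda>j. j \<noteq> 0)) \<le> peierls H x ones"
        using pf[of x ones] f0 by simp
    qed
  next
    fix p :: nat and e :: real assume e: "e > 0"
    from item3_upper[OF w' e, of p] obtain x' where
      x': "agree p x' zeros" "x' \<noteq> zeros" "peierls (H \<circ> flip) x' zeros \<le> ereal (H_min H1 + (H \<circ> flip) (\<lambda>j. j = 0) + e)"
      by blast
    have "agree p (flip x') ones" using x'(1) by (auto simp: agree_def flip_def zeros_def ones_def)
    moreover have "flip x' \<noteq> ones" using x'(2) by (metis flip_flip flip_ones)
    moreover have "peierls H (flip x') ones \<le> ereal (H_min H1 + H (\<lambda>j. j \<noteq> 0) + e)"
      using pf[of "flip x'" ones] x'(3) f0 by simp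
    ultimately show "\<exists>x. agree p x ones \<and> x \<noteq> ones \<and> peierls H x ones \<le> ereal (H_min H1 + H (\<lambda>j. j \<noteq> 0) + e)"
      by blast
  qed
  show ?thesis using P1 P2 P3 P4 P5 P6 by blast
qed


end
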